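(* Let $({\mathbf\Lambda}^\star,{\mathbf V}^\star)$ with ${\mathbf\Lambda}^\star,{\mathbf V}^\star\ge0$ be a minimizer of $F$ over pairs of entrywise nonnegative matrices. Then $\mathcal U_s(\pi_{{\mathbf\Lambda}^\star,{\mathbf V}^\star},\ell)\le\epsilon_s$ for all $s\in[K]$ and $\ell\in[\![L]\!]$.
   Context: Let $K\ge 2$, $d\ge1$, and let $(X,S,Y)$ be a random triple with values in $\mathbb R^d\times[K]\times\mathbb R$, $\mathbb E[Y^2]<\infty$. Put $\eta(x)=\mathbb E[Y\mid X=x]$, $p_s=\mathbb P(S=s)>0$, $\tau_s(x)=\mathbb P(S=s\mid X=x)$, $t_s(x)=1-\tau_s(x)/p_s$, $\mathbf t(x)=(t_s(x))_{s\in[K]}$. Fix $B>0$, $L\in\mathbb N$, $\beta>0$, $\boldsymbol\epsilon=(\epsilon_s)\in[0,1]^K$; $[\![L]\!]=\{-L,\dots,L\}$, $r_\ell(x)=(\eta(x)-\ell B/L)^2$. For a prediction $\pi$ supported on the grid $\{\ell B/L:\ell\in[\![L]\!]\}$ (i.e. a Markov kernel with $\pi(\ell\mid x)$ the mass at $\ell B/L$), $\mathcal U_s(\pi,\ell)=|\mathbb E[\pi(\ell\mid X)\mid S=s]-\mathbb E[\pi(\ell\mid X)]|$. $\mathrm{LSE}_\beta(\mathbf w)=\beta^{-1}\log\sum_j e^{\beta w_j}$, $\sigma_j(\mathbf w)=e^{w_j}/\sum_ie^{w_i}$. For ${\mathbf\Lambda}=(\lambda_{\ell s}),{\mathbf V}=(\nu_{\ell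 s})$ with rows $\boldsymbol\lambda_\ell,\boldsymbol\nu_\ell\in\mathbb R^K$: $F({\mathbf\Lambda},{\mathbf V})=\mathbb E\big[\mathrm{LSE}_\beta\big((\langle\boldsymbol\lambda_\ell-\boldsymbol\nu_\ell,\mathbf t(X)\rangle-r_\ell(X))_{\ell\in[\![L]\!]}\big)\big]+\sum_{\ell}\langle\boldsymbol\lambda_\ell+\boldsymbol\nu_\ell,\boldsymbol\epsilon\rangle$, and $\pi_{{\mathbf\Lambda},{\mathbf V}}(\ell\mid x)=\sigma_\ell\big(\beta(\langle\boldsymbol\lambda_{\ell'}-\boldsymbol\nu_{\ell'},\mathbf t(x)\rangle-r_{\ell'}(x))_{\ell'\in[\![L]\!]}\big)$. *)

theory Defs
  imports "HOL-Probability.Probability"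
begin

definition grid :: "nat \<Rightarrow> int set" where
  "grid L = {- int L .. int L}"

definition LSE :: "real \<Rightarrow> 'i set \<Rightarrow> ('i \<Rightarrow> real) \<Rightarrow> real" where
  "LSE \<beta> I w = (1 / \<beta>) * ln (\<Sum>j\<in>I. exp (\<beta> * w j))"

definition softmax :: "'i set \<Rightarrow> ('i \<Rightarrow> real) \<Rightarrow> 'i \<Rightarrow> real" where
  "softmax I w j = exp (w j) / (\<Sum>i\<in>I. exp (w i))"

definition tfun :: "(nat \<Rightarrow> 'x \<Rightarrow> real) \<Rightarrow> (nat \<Rightarrow> real) \<Rightarrow> nat \<Rightarrow> 'x \<Rightarrow> real" where
  "tfun \<tau> p s x = 1 - \<tau> s x / p s"

definition rfun :: "('x \<Rightarrow> real) \<Rightarrow> real \<Rightarrow> nat \<Rightarrow> int \<Rightarrow> 'x \<Rightarrow> real" where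
  "rfun \<eta> B L l x = (\<eta> x - real_of_int l * B / real L) ^ 2"

definition score :: "nat \<Rightarrow> ('x \<Rightarrow> real) \<Rightarrow> (nat \<Rightarrow> 'x \<Rightarrow> real) \<Rightarrow> (nat \<Rightarrow> real)
    \<Rightarrow> real \<Rightarrow> nat \<Rightarrow> (int \<Rightarrow> nat \<Rightarrow> real) \<Rightarrow> (int \<Rightarrow> nat \<Rightarrow> real) \<Rightarrow> 'x \<Rightarrow> int \<Rightarrow> real" where
  "score K \<eta> \<tau> p B L \<Lambda> V x l =
     (\<Sum>s\<in>{1..K}. (\<Lambda> l s - V l s) * tfun \<tau> p s x) - rfun \<eta> B L l x"

definition Fobj :: "'a measure \<Rightarrow> ('a \<Rightarrow> 'x) \<Rightarrow> nat \<Rightarrow> ('x \<Rightarrow> real) \<Rightarrow> (nat \<Rightarrow> 'x \<Rightarrow> real)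
    \<Rightarrow> (nat \<Rightarrow> real) \<Rightarrow> real \<Rightarrow> nat \<Rightarrow> real \<Rightarrow> (nat \<Rightarrow> real)
    \<Rightarrow> (int \<Rightarrow> nat \<Rightarrow> real) \<Rightarrow> (int \<Rightarrow> nat \<Rightarrow> real) \<Rightarrow> real" where
  "Fobj M X K \<eta> \<tau> p B L \<beta> \<epsilon> \<Lambda> V =
     (\<integral>\<omega>. LSE \<beta> (grid L) (score K \<eta> \<tau> p B L \<Lambda> V (X \<omega>)) \<partial>M)
     + (\<Sum>l\<in>grid L. \<Sum>s\<in>{1..K}. (\<Lambda> l s + V l s) * \<epsilon> s)"

definition pred :: "nat \<Rightarrow> ('x \<Rightarrow> real) \<Rightarrow> (nat \<Rightarrow> 'x \<Rightarrow> real) \<Rightarrow> (nat \<Rightarrow> real)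
    \<Rightarrow> real \<Rightarrow> nat \<Rightarrow> real \<Rightarrow> (int \<Rightarrow> nat \<Rightarrow> real) \<Rightarrow> (int \<Rightarrow> nat \<Rightarrow> real) \<Rightarrow> 'x \<Rightarrow> int \<Rightarrow> real" where
  "pred K \<eta> \<tau> p B L \<beta> \<Lambda> V x l =
     softmax (grid L) (\<lambda>l'. \<beta> * score K \<eta> \<tau> p B L \<Lambda> V x l') l"

text \<open>Unfairness U_s(pi, l) = |E[pi(l|X) | S = s] - E[pi(l|X)]|, where the
  conditional expectation given the event {S = s} is E[f 1_{S=s}] / P(S = s).\<close>
definition unfair :: "'a measure \<Rightarrow> ('a \<Rightarrow> 'x) \<Rightarrow> ('a \<Rightarrow> nat) \<Rightarrow> ('x \<Rightarrow> int \<Rightarrow> real) \<Rightarrow> nat \<Rightarrow> int \<Rightarrow> real" where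
  "unfair M X S \<pi> s l =
     \<bar>(\<integral>\<omega>. \<pi> (X \<omega>) l * indicator {\<omega>\<in>space M. S \<omega> = s} \<omega> \<partial>M) / measure M {\<omega>\<in>space M. S \<omega> = s}
      - (\<integral>\<omega>. \<pi> (X \<omega>) l \<partial>M)\<bar>"

end

theory Submission
  imports Defs
begin

lemma vimage_subalg:
  assumes X: "X \<in> borel_measurable M"
  shows "subalgebra M (vimage_algebra (space M) X borel)"
  unfolding subalgebra_def
proof
  show "space (vimage_algebra (space M) X borel) = space M" by simp
  show "sets (vimage_algebra (space M) X borel) \<subseteq> sets M"
    using X by (auto simp: sets_vimage_algebra2 measurable_def)
qed

lemma ce_ident:
  fixes X :: "'a \<Rightarrow> 'b::topological_space" and Z :: "'a \<Rightarrow> real" and g :: "'b \<Rightarrow> real"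
  assumes M: "prob_space M" and X: "X \<in> borel_measurable M"
    and Z: "integrable M Z" and g: "g \<in> borel_measurable borel"
    and gi: "integrable M (\<lambda>\<omega>. g (X \<omega>))"
    and ce: "\<forall>A\<in>sets borel. (\<integral>\<omega>. Z \<omega> * indicator (X -` A \<inter> space M) \<omega> \<partial>M)
          = (\<integral>\<omega>. g (X \<omega>) * indicator (X -` A \<inter> space M) \<omega> \<partial>M)"
  shows "AE \<omega> in M. real_cond_exp M (vimage_algebra (space M) X borel) Z \<omega> = g (X \<omega>)"
proof -
  let ?F = "vimage_algebra (space M) X borel"
  interpret prob_space M by fact
  interpret finite_measure_subalgebra M ?F
    by unfold_locales (rule vimage_subalg[OF X])
  have Xm: "X \<in> measurable ?F borel"
    by (rule measurable_vimage_algebra1) (use X in \<open>auto simp: measurable_def\<close>)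
  have gF: "(\<lambda>\<omega>. g (X \<omega>)) \<in> borel_measurable ?F"
    using measurable_comp[OF Xm g] by (simp add: o_def)
  show ?thesis
  proof (rule real_cond_exp_charact[OF _ Z gi gF])
    fix A assume "A \<in> sets ?F"
    then obtain B where B: "B \<in> sets borel" "A = X -` B \<inter> space M"
      using X by (auto simp: sets_vimage_algebra2 measurable_def)
    show "(\<integral>x\<in>A. Z x \<partial>M) = (\<integral>x\<in>A. g (X x) \<partial>M)"
      using ce B unfolding set_lebesgue_integral_def by (simp add: mult.commute)
  qed
qed

lemma sq_int_ce:
  fixes X :: "'a \<Rightarrow> 'b::topological_space" and Z :: "'a \<Rightarrow> real" and g :: "'b \<Rightarrow> real"
  assumes M: "prob_space M" and X: "X \<in> borel_measurable M"
    and Zm: "Z \<in> borel_measurable M" and Z2: "integrable M (\<lambda>\<omega>. (Z \<omega>)\<^sup>2)"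
    and g: "g \<in> borel_measurable borel"
    and gi: "integrable M (\<lambda>\<omega>. g (X \<omega>))"
    and ce: "\<forall>A\<in>sets borel. (\<integral>\<omega>. Z \<omega> * indicator (X -` A \<inter> space M) \<omega> \<partial>M)
          = (\<integral>\<omega>. g (X \<omega>) * indicator (X -` A \<inter> space M) \<omega> \<partial>M)"
  shows "integrable M (\<lambda>\<omega>. (g (X \<omega>))\<^sup>2)"
proof -
  let ?F = "vimage_algebra (space M) X borel"
  interpret prob_space M by fact
  interpret finite_measure_subalgebra M ?F
    by unfold_locales (rule vimage_subalg[OF X])
  have Z: "integrable M Z" by (rule square_integrable_imp_integrable[OF Zm Z2])
  have AE: "AE \<omega> in M. real_cond_exp M ?F Z \<omega> = g (X \<omega>)"
    by (rule ce_ident[OF M X Z g gi ce])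
  have "integrable M (\<lambda>\<omega>. (real_cond_exp M ?F Z \<omega>)\<^sup>2)"
    by (rule integrable_convex_cond_exp[where I=UNIV, OF Z _ _ _ convex_power2]) (use Z2 in auto)
  then show ?thesis
    by (rule integrable_cong_AE_imp) (use AE measurable_comp[OF X g] in \<open>auto simp: o_def\<close>)
qed

lemma ind_ce:
  fixes X :: "'a \<Rightarrow> 'b::topological_space" and g :: "'b \<Rightarrow> real" and h :: "'b \<Rightarrow> real"
  assumes M: "prob_space M" and X: "X \<in> borel_measurable M"
    and E: "E \<in> sets M" and g: "g \<in> borel_measurable borel"
    and gi: "integrable M (\<lambda>\<omega>. g (X \<omega>))"
    and ce: "\<forall>A\<in>sets borel. measure M (E \<inter> (X -` A \<inter> space M))
          = (\<integral>\<omega>. g (X \<omega>) * indicator (X -` A \<inter> space M) \<omega> \<partial>M)"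
    and h: "h \<in> borel_measurable borel" and hb: "\<And>x. \<bar>h x\<bar> \<le> 1"
  shows "AE \<omega> in M. 0 \<le> g (X \<omega>) \<and> g (X \<omega>) \<le> 1"
    and "(\<integral>\<omega>. h (X \<omega>) * g (X \<omega>) \<partial>M) = (\<integral>\<omega>. h (X \<omega>) * indicator E \<omega> \<partial>M)"
proof -
  let ?F = "vimage_algebra (space M) X borel"
  let ?Z = "indicator E :: 'a \<Rightarrow> real"
  interpret prob_space M by fact
  interpret finite_measure_subalgebra M ?F
    by unfold_locales (rule vimage_subalg[OF X])
  have Z: "integrable M ?Z" using E by (intro integrable_real_indicator) (auto simp: less_top[symmetric])
  have ce': "\<forall>A\<in>sets borel. (\<integral>\<omega>. ?Z \<omega> * indicator (X -` A \<inter> space M) \<omega> \<partial>M)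
          = (\<integral>\<omega>. g (X \<omega>) * indicator (X -` A \<inter> space M) \<omega> \<partial>M)"
  proof
    fix A :: "'b set" assume A: "A \<in> sets borel"
    have s: "X -` A \<inter> space M \<in> sets M" using X A by (simp add: measurable_sets)
    have "(\<integral>\<omega>. ?Z \<omega> * indicator (X -` A \<inter> space M) \<omega> \<partial>M) = (\<integral>\<omega>. indicator (E \<inter> (X -` A \<inter> space M)) \<omega> \<partial>M)"
      by (simp add: indicator_inter_arith)
    also have "\<dots> = measure M (E \<inter> (X -` A \<inter> space M))" using E s by simp
    finally show "(\<integral>\<omega>. ?Z \<omega> * indicator (X -` A \<inter> space M) \<omega> \<partial>M)
          = (\<integral>\<omega>. g (X \<omega>) * indicator (X -` A \<inter> space M) \<omega> \<partial>M)" using ce A by simp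
  qed
  have AE: "AE \<omega> in M. real_cond_exp M ?F ?Z \<omega> = g (X \<omega>)"
    by (rule ce_ident[OF M X Z g gi ce'])
  have "AE \<omega> in M. real_cond_exp M ?F ?Z \<omega> \<ge> 0"
    by (rule real_cond_exp_ge_c[OF Z]) auto
  moreover have "AE \<omega> in M. real_cond_exp M ?F ?Z \<omega> \<le> 1"
    by (rule real_cond_exp_le_c[OF Z]) auto
  ultimately show "AE \<omega> in M. 0 \<le> g (X \<omega>) \<and> g (X \<omega>) \<le> 1" using AE by auto
  have Xm: "X \<in> measurable ?F borel"
    by (rule measurable_vimage_algebra1) (use X in \<open>auto simp: measurable_def\<close>)
  have hF: "(\<lambda>\<omega>. h (X \<omega>)) \<in> borel_measurable ?F"
    using measurable_comp[OF Xm h] by (simp add: o_def)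
  have hM: "(\<lambda>\<omega>. h (X \<omega>)) \<in> borel_measurable M"
    using measurable_comp[OF X h] by (simp add: o_def)
  have "integrable M (\<lambda>\<omega>. h (X \<omega>) * ?Z \<omega>)"
  proof (rule Bochner_Integration.integrable_bound[where f="\<lambda>_. 1::real"])
    show "(\<lambda>\<omega>. h (X \<omega>) * ?Z \<omega>) \<in> borel_measurable M"
      using hM E by (intro borel_measurable_times) auto
    show "AE x in M. norm (h (X x) * ?Z x) \<le> norm ((\<lambda>_. 1::real) x)"
      using hb by (auto simp: indicator_def abs_le_iff)
  qed simp
  then have "(\<integral>\<omega>. h (X \<omega>) * real_cond_exp M ?F ?Z \<omega> \<partial>M) = (\<integral>\<omega>. h (X \<omega>) * ?Z \<omega> \<partial>M)"
    by (rule real_cond_exp_intg(2)[OF _ hF]) (use E in simp)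
  moreover have "(\<integral>\<omega>. h (X \<omega>) * real_cond_exp M ?F ?Z \<omega> \<partial>M) = (\<integral>\<omega>. h (X \<omega>) * g (X \<omega>) \<partial>M)"
    by (rule integral_cong_AE) (use AE hM measurable_comp[OF X g] in \<open>auto simp: o_def intro!: borel_measurable_times\<close>)
  ultimately show "(\<integral>\<omega>. h (X \<omega>) * g (X \<omega>) \<partial>M) = (\<integral>\<omega>. h (X \<omega>) * indicator E \<omega> \<partial>M)" by simp
qed

lemma exp_quad: fixes x :: real assumes "x \<le> 1" shows "exp x - 1 \<le> x + x\<^sup>2"
proof (cases "x \<ge> 0")
  case True then show ?thesis using exp_bound[OF True assms] by simp
next
  case False
  define y where "y = -x"
  have y: "y > 0" using False y_def by simp
  have A: "1 + y + y\<^sup>2 / 2 \<le> exp y" using exp_lower_Taylor_quadratic[of y] y by simp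
  have P: "(1 - y + y\<^sup>2) * (1 + y + y\<^sup>2 / 2) \<ge> 1"
  proof -
    have "(1 - y + y\<^sup>2) * (1 + y + y\<^sup>2 / 2) = 1 + y\<^sup>2/2 + y^3/2 + y^4/2"
      by (simp add: field_simps power2_eq_square power3_eq_cube power4_eq_xxxx)
    moreover have "y\<^sup>2/2 + y^3/2 + y^4/2 \<ge> 0" using y by simp
    ultimately show ?thesis by linarith
  qed
  have q0: "1 - y + y\<^sup>2 = (y - 1/2)\<^sup>2 + 3/4" by (simp add: power2_eq_square algebra_simps)
  have q: "1 - y + y\<^sup>2 > 0" unfolding q0 by (simp add: add_nonneg_pos)
  have "(1 - y + y\<^sup>2) * exp y \<ge> 1"
    using P mult_left_mono[OF A less_imp_le[OF q]] by linarith
  then have "exp x \<le> 1 - y + y\<^sup>2"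
    using y_def by (simp add: exp_minus field_simps)
  then show ?thesis using y_def by simp
qed

lemma lse_pert:
  fixes w :: "'i \<Rightarrow> real"
  assumes I: "finite I" "j \<in> I" and \<beta>: "\<beta> > 0"
  shows "LSE \<beta> I (\<lambda>i. w i + (if i = j then \<delta> else 0)) - LSE \<beta> I w
         \<le> softmax I (\<lambda>i. \<beta> * w i) j * (exp (\<beta> * \<delta>) - 1) / \<beta>"
proof -
  define S where "S = (\<Sum>i\<in>I. exp (\<beta> * w i))"
  define \<pi> where "\<pi> = exp (\<beta> * w j) / S"
  have Spos: "S > 0" unfolding S_def using I by (intro sum_pos) auto
  have S': "(\<Sum>i\<in>I. exp (\<beta> * (w i + (if i = j then \<delta> else 0)))) = S + exp (\<beta> * w j) * (exp (\<beta> * \<delta>) - 1)"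
  proof -
    have "(\<Sum>i\<in>I. exp (\<beta> * (w i + (if i = j then \<delta> else 0)))) = (\<Sum>i\<in>I. exp (\<beta> * w i) + (if i = j then exp (\<beta> * w j) * (exp (\<beta> * \<delta>) - 1) else 0))"
      by (rule sum.cong) (auto simp: distrib_left exp_add algebra_simps)
    also have "\<dots> = S + exp (\<beta> * w j) * (exp (\<beta> * \<delta>) - 1)"
      using I by (simp add: sum.distrib S_def)
    finally show ?thesis .
  qed
  have S'pos: "S + exp (\<beta> * w j) * (exp (\<beta> * \<delta>) - 1) > 0"
    unfolding S'[symmetric] using I by (intro sum_pos) auto
  have eq: "S + exp (\<beta> * w j) * (exp (\<beta> * \<delta>) - 1) = S * (1 + \<pi> * (exp (\<beta> * \<delta>) - 1))"
    unfolding \<pi>_def using Spos by (simp add: field_simps)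
  have pos1: "1 + \<pi> * (exp (\<beta> * \<delta>) - 1) > 0" using S'pos Spos eq by (metis zero_less_mult_pos)
  have "LSE \<beta> I (\<lambda>i. w i + (if i = j then \<delta> else 0)) - LSE \<beta> I w
      = (1/\<beta>) * (ln (S * (1 + \<pi> * (exp (\<beta> * \<delta>) - 1))) - ln S)"
    unfolding LSE_def using S' eq S_def by (simp add: right_diff_distrib)
  also have "\<dots> = (1/\<beta>) * ln (1 + \<pi> * (exp (\<beta> * \<delta>) - 1))"
    using Spos pos1 by (simp add: ln_mult)
  also have "\<dots> \<le> (1/\<beta>) * (\<pi> * (exp (\<beta> * \<delta>) - 1))"
    using ln_le_minus_one[OF pos1] \<beta> by (intro mult_left_mono) auto
  also have "\<pi> = softmax I (\<lambda>i. \<beta> * w i) j" unfolding \<pi>_def S_def softmax_def by simp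
  finally show ?thesis by simp
qed

lemma lse_bound:
  fixes w :: "'i \<Rightarrow> real"
  assumes I: "finite I" "I \<noteq> {}" and \<beta>: "\<beta> > 0"
  shows "\<bar>LSE \<beta> I w\<bar> \<le> (\<Sum>i\<in>I. \<bar>w i\<bar>) + \<bar>ln (real (card I))\<bar> / \<beta>"
proof -
  define S where "S = (\<Sum>i\<in>I. exp (\<beta> * w i))"
  define T where "T = (\<Sum>i\<in>I. \<bar>w i\<bar>)"
  obtain j where j: "j \<in> I" using I by auto
  have Spos: "S > 0" unfolding S_def using I j by (intro sum_pos) auto
  have "exp (\<beta> * w j) \<le> S" unfolding S_def using I j
    by (intro member_le_sum) auto
  then have "\<beta> * w j \<le> ln S" using Spos by (simp add: ln_ge_iff)
  then have lo: "w j \<le> LSE \<beta> I w" unfolding LSE_def S_def[symmetric] using \<beta> by (simp add: field_simps)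
  have "\<bar>w j\<bar> \<le> T" unfolding T_def using I j by (intro member_le_sum) auto
  then have lo': "- T \<le> LSE \<beta> I w" using lo by linarith
  have "S \<le> (\<Sum>i\<in>I. exp (\<beta> * T))" unfolding S_def
  proof (rule sum_mono)
    fix i assume "i \<in> I"
    then have "\<bar>w i\<bar> \<le> T" unfolding T_def using I by (intro member_le_sum) auto
    then show "exp (\<beta> * w i) \<le> exp (\<beta> * T)" using \<beta> by (simp add: mult_left_mono abs_le_iff)
  qed
  also have "\<dots> = real (card I) * exp (\<beta> * T)" by simp
  finally have "ln S \<le> ln (real (card I) * exp (\<beta> * T))" using Spos by simp
  also have "\<dots> = ln (real (card I)) + \<beta> * T" using I by (simp add: ln_mult card_gt_0_iff)
  finally have "LSE \<beta> I w \<le> ln (real (card I)) / \<beta> + T"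
    unfolding LSE_def S_def[symmetric] using \<beta> by (simp add: field_simps)
  moreover have "ln (real (card I)) / \<beta> \<le> \<bar>ln (real (card I))\<bar> / \<beta>"
    using \<beta> by (intro divide_right_mono) auto
  moreover have "0 \<le> \<bar>ln (real (card I))\<bar> / \<beta>" using \<beta> by simp
  ultimately show ?thesis using lo' unfolding T_def[symmetric] abs_le_iff by linarith
qed

lemma score_pert:
  assumes "s \<in> {1..K}"
  shows "score K \<eta> \<tau> p B L (\<Lambda>(l := (\<Lambda> l)(s := \<Lambda> l s + a))) (V(l := (V l)(s := V l s + b))) x l'
       = score K \<eta> \<tau> p B L \<Lambda> V x l' + (if l' = l then (a - b) * tfun \<tau> p s x else 0)"
proof (cases "l' = l")
  case True
  have "(\<Sum>k\<in>{1..K}. ((\<Lambda>(l := (\<Lambda> l)(s := \<Lambda> l s + a))) l' k - (V(l := (V l)(s := V l s + b))) l' k) * tfun \<tau> p k x)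
      = (\<Sum>k\<in>{1..K}. (\<Lambda> l' k - V l' k) * tfun \<tau> p k x + (if k = s then (a - b) * tfun \<tau> p s x else 0))"
    using True by (intro sum.cong) (auto simp: algebra_simps)
  also have "\<dots> = (\<Sum>k\<in>{1..K}. (\<Lambda> l' k - V l' k) * tfun \<tau> p k x) + (a - b) * tfun \<tau> p s x"
    using assms by (simp add: sum.distrib)
  finally show ?thesis using True unfolding score_def by simp
next
  case False
  then show ?thesis unfolding score_def by simp
qed

lemma lin_pert:
  fixes \<Lambda> V :: "int \<Rightarrow> nat \<Rightarrow> real" and \<epsilon> :: "nat \<Rightarrow> real" and a b :: real
  assumes "s \<in> {1..K}" "l \<in> grid L"
  shows "(\<Sum>l'\<in>grid L. \<Sum>k\<in>{1..K}. ((\<Lambda>(l := (\<Lambda> l)(s := \<Lambda> l s + a))) l' k + (V(l := (V l)(s := V l s + b))) l' k) * \<epsilon> k)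
       = (\<Sum>l'\<in>grid L. \<Sum>k\<in>{1..K}. (\<Lambda> l' k + V l' k) * \<epsilon> k) + (a + b) * \<epsilon> s"
proof -
  have fin: "finite (grid L)" unfolding grid_def by simp
  have "(\<Sum>l'\<in>grid L. \<Sum>k\<in>{1..K}. ((\<Lambda>(l := (\<Lambda> l)(s := \<Lambda> l s + a))) l' k + (V(l := (V l)(s := V l s + b))) l' k) * \<epsilon> k)
     = (\<Sum>l'\<in>grid L. (\<Sum>k\<in>{1..K}. (\<Lambda> l' k + V l' k) * \<epsilon> k) + (if l' = l then (a + b) * \<epsilon> s else 0))"
  proof (rule sum.cong)
    fix l' assume "l' \<in> grid L"
    show "(\<Sum>k\<in>{1..K}. ((\<Lambda>(l := (\<Lambda> l)(s := \<Lambda> l s + a))) l' k + (V(l := (V l)(s := V l s + b))) l' k) * \<epsilon> k)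
       = (\<Sum>k\<in>{1..K}. (\<Lambda> l' k + V l' k) * \<epsilon> k) + (if l' = l then (a + b) * \<epsilon> s else 0)"
    proof (cases "l' = l")
      case True
      have "(\<Sum>k\<in>{1..K}. ((\<Lambda>(l := (\<Lambda> l)(s := \<Lambda> l s + a))) l' k + (V(l := (V l)(s := V l s + b))) l' k) * \<epsilon> k)
         = (\<Sum>k\<in>{1..K}. (\<Lambda> l' k + V l' k) * \<epsilon> k + (if k = s then (a + b) * \<epsilon> s else 0))"
        using True by (intro sum.cong) (auto simp: distrib_right add_ac)
      also have "\<dots> = (\<Sum>k\<in>{1..K}. (\<Lambda> l' k + V l' k) * \<epsilon> k) + (a + b) * \<epsilon> s"
        using assms by (simp add: sum.distrib)
      finally show ?thesis using True by simp
    qed simp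
  qed simp
  also have "\<dots> = (\<Sum>l'\<in>grid L. \<Sum>k\<in>{1..K}. (\<Lambda> l' k + V l' k) * \<epsilon> k) + (a + b) * \<epsilon> s"
    using assms fin by (simp add: sum.distrib)
  finally show ?thesis .
qed

lemma lse_integrable:
  fixes f :: "'i \<Rightarrow> 'a \<Rightarrow> real"
  assumes I: "finite I" "I \<noteq> {}" and \<beta>: "\<beta> > 0" and M: "finite_measure M"
    and f: "\<And>i. i \<in> I \<Longrightarrow> integrable M (f i)"
  shows "integrable M (\<lambda>\<omega>. LSE \<beta> I (\<lambda>i. f i \<omega>))"
proof (rule Bochner_Integration.integrable_bound[where f="\<lambda>\<omega>. (\<Sum>i\<in>I. \<bar>f i \<omega>\<bar>) + \<bar>ln (real (card I))\<bar> / \<beta>"])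
  have [measurable]: "\<And>i. i \<in> I \<Longrightarrow> f i \<in> borel_measurable M" using f by auto
  show "(\<lambda>\<omega>. LSE \<beta> I (\<lambda>i. f i \<omega>)) \<in> borel_measurable M"
    unfolding LSE_def by measurable
  show "integrable M (\<lambda>\<omega>. (\<Sum>i\<in>I. \<bar>f i \<omega>\<bar>) + \<bar>ln (real (card I))\<bar> / \<beta>)"
    using f M by (intro Bochner_Integration.integrable_add integrable_sum integrable_abs finite_measure.integrable_const) auto
  show "AE \<omega> in M. norm (LSE \<beta> I (\<lambda>i. f i \<omega>)) \<le> norm ((\<Sum>i\<in>I. \<bar>f i \<omega>\<bar>) + \<bar>ln (real (card I))\<bar> / \<beta>)"
    using lse_bound[OF I \<beta>] by (auto intro!: AE_I2 order_trans[OF _ abs_ge_self])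
qed

lemma small_h:
  fixes A c h0 :: real
  assumes c: "c \<ge> 0" and h0: "h0 > 0" and H: "\<And>h. 0 < h \<Longrightarrow> h \<le> h0 \<Longrightarrow> 0 \<le> A + h * c"
  shows "0 \<le> A"
proof (rule ccontr)
  assume "\<not> 0 \<le> A"
  then have A: "A < 0" by simp
  define h where "h = min h0 (- A / (2 * (c + 1)))"
  have hpos: "0 < h" using h0 A c unfolding h_def by (auto simp: field_simps)
  have "h * c \<le> (- A / (2 * (c + 1))) * c" unfolding h_def using c by (intro mult_right_mono) auto
  also have "\<dots> = (- A) * (c / (2 * (c + 1)))" by simp
  also have "\<dots> \<le> (- A) * (1/2)"
  proof (rule mult_left_mono)
    show "c / (2 * (c + 1)) \<le> 1/2" using c by (simp add: field_simps)
  qed (use A in simp)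
  also have "\<dots> < - A" using A by simp
  finally have "A + h * c < 0" by simp
  with H[OF hpos] show False unfolding h_def by auto
qed

lemma meas_test:
  fixes \<tau> :: "nat \<Rightarrow> real ^ 'd \<Rightarrow> real" and \<eta> :: "real ^ 'd \<Rightarrow> real"
  assumes [measurable]: "\<And>k. k \<in> {1..K} \<Longrightarrow> \<tau> k \<in> borel_measurable borel" "\<eta> \<in> borel_measurable borel"
  shows "(\<lambda>x. pred K \<eta> \<tau> p B L \<beta> \<Lambda> V x l) \<in> borel_measurable borel"
  unfolding pred_def softmax_def score_def tfun_def rfun_def by measurable

theorem lemma3p2:
  fixes M :: "'a measure"
    and X :: "'a \<Rightarrow> real ^ 'd" and S :: "'a \<Rightarrow> nat" and Y :: "'a \<Rightarrow> real"
    and K L :: nat and B \<beta> :: real and \<epsilon> :: "nat \<Rightarrow> real"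
    and \<eta> :: "real ^ 'd \<Rightarrow> real" and \<tau> :: "nat \<Rightarrow> real ^ 'd \<Rightarrow> real" and p :: "nat \<Rightarrow> real"
    and \<Lambda>s Vs :: "int \<Rightarrow> nat \<Rightarrow> real"
  assumes M: "prob_space M"
    and X_meas: "X \<in> borel_measurable M"
    and S_meas: "S \<in> measurable M (count_space UNIV)"
    and S_range: "\<forall>\<omega>\<in>space M. S \<omega> \<in> {1..K}"
    and Y_meas: "Y \<in> borel_measurable M"
    and Y_L2: "integrable M (\<lambda>\<omega>. (Y \<omega>)\<^sup>2)"
    and K: "K \<ge> 2" and L: "L \<ge> 1" and B: "B > 0" and \<beta>: "\<beta> > 0"
    and \<epsilon>: "\<forall>s\<in>{1..K}. 0 \<le> \<epsilon> s \<and> \<epsilon> s \<le> 1"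
    and p_def: "\<forall>s\<in>{1..K}. p s = measure M {\<omega>\<in>space M. S \<omega> = s}"
    and p_pos: "\<forall>s\<in>{1..K}. p s > 0"
    \<comment> \<open>eta(x) = E[Y | X = x]: a Borel version of the conditional expectation\<close>
    and \<eta>_meas: "\<eta> \<in> borel_measurable borel"
    and \<eta>_int: "integrable M (\<lambda>\<omega>. \<eta> (X \<omega>))"
    and \<eta>_ce: "\<forall>A\<in>sets borel.
        (\<integral>\<omega>. Y \<omega> * indicator (X -` A \<inter> space M) \<omega> \<partial>M)
      = (\<integral>\<omega>. \<eta> (X \<omega>) * indicator (X -` A \<inter> space M) \<omega> \<partial>M)"
    \<comment> \<open>tau_s(x) = P(S = s | X = x): a Borel version of the conditional probability\<close>
    and \<tau>_meas: "\<forall>s\<in>{1..K}. \<tau> s \<in> borel_measurable borel"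
    and \<tau>_int: "\<forall>s\<in>{1..K}. integrable M (\<lambda>\<omega>. \<tau> s (X \<omega>))"
    and \<tau>_ce: "\<forall>s\<in>{1..K}. \<forall>A\<in>sets borel.
        measure M {\<omega>\<in>space M. S \<omega> = s \<and> X \<omega> \<in> A}
      = (\<integral>\<omega>. \<tau> s (X \<omega>) * indicator (X -` A \<inter> space M) \<omega> \<partial>M)"
    \<comment> \<open>(Lambda*, V*) is a minimizer of F over entrywise nonnegative pairs\<close>
    and nonneg_star: "\<forall>l\<in>grid L. \<forall>s\<in>{1..K}. \<Lambda>s l s \<ge> 0 \<and> Vs l s \<ge> 0"
    and minimizer: "\<forall>\<Lambda> V. (\<forall>l\<in>grid L. \<forall>s\<in>{1..K}. \<Lambda> l s \<ge> 0 \<and> V l s \<ge> 0) \<longrightarrow>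
        Fobj M X K \<eta> \<tau> p B L \<beta> \<epsilon> \<Lambda>s Vs \<le> Fobj M X K \<eta> \<tau> p B L \<beta> \<epsilon> \<Lambda> V"
  shows "\<forall>s\<in>{1..K}. \<forall>l\<in>grid L.
           unfair M X S (pred K \<eta> \<tau> p B L \<beta> \<Lambda>s Vs) s l \<le> \<epsilon> s"
proof -
  interpret P: prob_space M by (rule M)
  have fm: "finite_measure M" by (rule P.finite_measure_axioms)
  have finG: "finite (grid L)" "grid L \<noteq> {}" unfolding grid_def by auto
  have [measurable]: "X \<in> borel_measurable M" by (rule X_meas)
  have [measurable]: "\<eta> \<in> borel_measurable borel" by (rule \<eta>_meas)
  have \<tau>m[measurable]: "\<And>k. k \<in> {1..K} \<Longrightarrow> \<tau> k \<in> borel_measurable borel" using \<tau>_meas by auto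
  have Ek: "\<And>k. {\<omega>\<in>space M. S \<omega> = k} \<in> sets M"
  proof -
    fix k
    have "{\<omega>\<in>space M. S \<omega> = k} = S -` {k} \<inter> space M" by auto
    then show "{\<omega>\<in>space M. S \<omega> = k} \<in> sets M" using measurable_sets[OF S_meas, of "{k}"] by simp
  qed
  have ceE: "\<And>k. k \<in> {1..K} \<Longrightarrow> \<forall>A\<in>sets borel. measure M ({\<omega>\<in>space M. S \<omega> = k} \<inter> (X -` A \<inter> space M))
          = (\<integral>\<omega>. \<tau> k (X \<omega>) * indicator (X -` A \<inter> space M) \<omega> \<partial>M)"
  proof -
    fix k assume k: "k \<in> {1..K}"
    show "\<forall>A\<in>sets borel. measure M ({\<omega>\<in>space M. S \<omega> = k} \<inter> (X -` A \<inter> space M))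
          = (\<integral>\<omega>. \<tau> k (X \<omega>) * indicator (X -` A \<inter> space M) \<omega> \<partial>M)"
    proof
      fix A :: "(real ^ 'd) set" assume A: "A \<in> sets borel"
      have "{\<omega>\<in>space M. S \<omega> = k} \<inter> (X -` A \<inter> space M) = {\<omega>\<in>space M. S \<omega> = k \<and> X \<omega> \<in> A}" by auto
      then show "measure M ({\<omega>\<in>space M. S \<omega> = k} \<inter> (X -` A \<inter> space M))
          = (\<integral>\<omega>. \<tau> k (X \<omega>) * indicator (X -` A \<inter> space M) \<omega> \<partial>M)" using \<tau>_ce k A by simp
    qed
  qed
  have \<tau>X: "\<And>k. k \<in> {1..K} \<Longrightarrow> AE \<omega> in M. 0 \<le> \<tau> k (X \<omega>) \<and> \<tau> k (X \<omega>) \<le> 1"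
  proof -
    fix k assume k: "k \<in> {1..K}"
    show "AE \<omega> in M. 0 \<le> \<tau> k (X \<omega>) \<and> \<tau> k (X \<omega>) \<le> 1"
      by (rule ind_ce(1)[OF M X_meas Ek \<tau>m[OF k] _ ceE[OF k], of "\<lambda>_. 0"]) (use \<tau>_int k in auto)
  qed
  have \<tau>h: "\<And>k h. k \<in> {1..K} \<Longrightarrow> h \<in> borel_measurable borel \<Longrightarrow> (\<And>x. \<bar>h x\<bar> \<le> 1) \<Longrightarrow>
      (\<integral>\<omega>. h (X \<omega>) * \<tau> k (X \<omega>) \<partial>M) = (\<integral>\<omega>. h (X \<omega>) * indicator {\<omega>\<in>space M. S \<omega> = k} \<omega> \<partial>M)"
  proof -
    fix k and h :: "real ^ 'd \<Rightarrow> real" assume k: "k \<in> {1..K}" and h: "h \<in> borel_measurable borel" "\<And>x. \<bar>h x\<bar> \<le> 1"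
    show "(\<integral>\<omega>. h (X \<omega>) * \<tau> k (X \<omega>) \<partial>M) = (\<integral>\<omega>. h (X \<omega>) * indicator {\<omega>\<in>space M. S \<omega> = k} \<omega> \<partial>M)"
      by (rule ind_ce(2)[OF M X_meas Ek \<tau>m[OF k] _ ceE[OF k] h]) (use \<tau>_int k in auto)
  qed
  have \<eta>2: "integrable M (\<lambda>\<omega>. (\<eta> (X \<omega>))\<^sup>2)"
    by (rule sq_int_ce[OF M X_meas Y_meas Y_L2 \<eta>_meas \<eta>_int \<eta>_ce])
  have tint: "\<And>k. k \<in> {1..K} \<Longrightarrow> integrable M (\<lambda>\<omega>. tfun \<tau> p k (X \<omega>))"
    unfolding tfun_def using \<tau>_int
    by (intro Bochner_Integration.integrable_diff P.integrable_const integrable_divide) auto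
  have rint: "\<And>l'. integrable M (\<lambda>\<omega>. rfun \<eta> B L l' (X \<omega>))"
    unfolding rfun_def power2_diff using \<eta>2 \<eta>_int
    by (intro Bochner_Integration.integrable_diff Bochner_Integration.integrable_add P.integrable_const integrable_mult_left integrable_mult_right) auto
  have scint: "\<And>\<Lambda> V l'. integrable M (\<lambda>\<omega>. score K \<eta> \<tau> p B L \<Lambda> V (X \<omega>) l')"
    unfolding score_def using tint rint
    by (intro Bochner_Integration.integrable_diff integrable_sum integrable_mult_right) auto
  have lseint: "\<And>\<Lambda> V. integrable M (\<lambda>\<omega>. LSE \<beta> (grid L) (score K \<eta> \<tau> p B L \<Lambda> V (X \<omega>)))"
    using lse_integrable[OF finG \<beta> fm, of "\<lambda>i \<omega>. score K \<eta> \<tau> p B L _ _ (X \<omega>) i"] scint by blast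
  show ?thesis
  proof (intro ballI)
    fix s l assume s: "s \<in> {1..K}" and l: "l \<in> grid L"
    define hf where "hf x = pred K \<eta> \<tau> p B L \<beta> \<Lambda>s Vs x l" for x
    have hfm[measurable]: "hf \<in> borel_measurable borel"
      unfolding hf_def pred_def softmax_def score_def tfun_def rfun_def by measurable
    have hf01: "\<And>x. 0 \<le> hf x \<and> hf x \<le> 1"
    proof -
      fix x
      let ?w = "\<lambda>l'. \<beta> * score K \<eta> \<tau> p B L \<Lambda>s Vs x l'"
      have pos: "0 < (\<Sum>i\<in>grid L. exp (?w i))" using finG by (intro sum_pos) auto
      have le: "exp (?w l) \<le> (\<Sum>i\<in>grid L. exp (?w i))" using finG l by (intro member_le_sum) auto
      show "0 \<le> hf x \<and> hf x \<le> 1" unfolding hf_def pred_def softmax_def using pos le by simp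
    qed
    have hfb: "\<And>x. \<bar>hf x\<bar> \<le> 1" using hf01 by (simp add: abs_le_iff)
    define t where "t \<omega> = tfun \<tau> p s (X \<omega>)" for \<omega>
    have ps: "p s > 0" using p_pos s by auto
    define C where "C = 1 + 1 / p s"
    have Cpos: "C > 0" unfolding C_def using ps by (simp add: add_pos_pos)
    have tC: "AE \<omega> in M. \<bar>t \<omega>\<bar> \<le> C"
      using \<tau>X[OF s]
    proof eventually_elim
      fix \<omega> assume a: "0 \<le> \<tau> s (X \<omega>) \<and> \<tau> s (X \<omega>) \<le> 1"
      have b1: "\<tau> s (X \<omega>) / p s \<le> 1 / p s" using a ps by (simp add: divide_right_mono)
      have b0: "0 \<le> \<tau> s (X \<omega>) / p s" using a ps by simp
      show "\<bar>t \<omega>\<bar> \<le> C" unfolding t_def tfun_def C_def abs_le_iff using b0 b1 ps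
        by (auto simp del: divide_const_simps)
    qed
    have tint': "integrable M t" unfolding t_def using tint[OF s] .
    have tm[measurable]: "t \<in> borel_measurable M" using tint' by auto
    have \<pi>m[measurable]: "(\<lambda>\<omega>. hf (X \<omega>)) \<in> borel_measurable M" by measurable
    have \<pi>int: "integrable M (\<lambda>\<omega>. hf (X \<omega>))"
      by (rule Bochner_Integration.integrable_bound[where f="\<lambda>_. 1::real"]) (use hfb in auto)
    have \<pi>tint: "integrable M (\<lambda>\<omega>. hf (X \<omega>) * t \<omega>)"
    proof (rule Bochner_Integration.integrable_bound[OF tint'])
      show "AE x in M. norm (hf (X x) * t x) \<le> norm (t x)"
        using hfb by (auto simp: abs_mult intro!: mult_left_le_one_le)
    qed measurable
    define I where "I = (\<integral>\<omega>. hf (X \<omega>) * t \<omega> \<partial>M)"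
    have key: "\<And>\<sigma> h. \<sigma> = 1 \<or> \<sigma> = -1 \<Longrightarrow> 0 < h \<Longrightarrow> h \<le> 1/(\<beta>*C) \<Longrightarrow> 0 \<le> \<sigma> * I + h * (\<beta> * C\<^sup>2) + \<epsilon> s"
    proof -
      fix \<sigma> h :: real assume \<sigma>: "\<sigma> = 1 \<or> \<sigma> = -1" and h: "0 < h" "h \<le> 1/(\<beta>*C)"
      define a where "a = (if \<sigma> = 1 then h else 0)"
      define b where "b = (if \<sigma> = 1 then 0 else h)"
      have ab: "a - b = \<sigma> * h" "a + b = h" "a \<ge> 0" "b \<ge> 0" using \<sigma> h by (auto simp: a_def b_def)
      define \<Lambda>' where "\<Lambda>' = \<Lambda>s(l := (\<Lambda>s l)(s := \<Lambda>s l s + a))"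
      define V' where "V' = Vs(l := (Vs l)(s := Vs l s + b))"
      have nn: "\<forall>l'\<in>grid L. \<forall>k\<in>{1..K}. \<Lambda>' l' k \<ge> 0 \<and> V' l' k \<ge> 0"
        using nonneg_star ab unfolding \<Lambda>'_def V'_def by auto
      have Fle: "Fobj M X K \<eta> \<tau> p B L \<beta> \<epsilon> \<Lambda>s Vs \<le> Fobj M X K \<eta> \<tau> p B L \<beta> \<epsilon> \<Lambda>' V'"
        using minimizer nn by blast
      have sc': "\<And>\<omega>. score K \<eta> \<tau> p B L \<Lambda>' V' (X \<omega>)
          = (\<lambda>l'. score K \<eta> \<tau> p B L \<Lambda>s Vs (X \<omega>) l' + (if l' = l then \<sigma> * h * t \<omega> else 0))"
        unfolding \<Lambda>'_def V'_def by (rule ext) (simp add: score_pert[OF s] ab(1) t_def)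
      define D where "D \<omega> = LSE \<beta> (grid L) (score K \<eta> \<tau> p B L \<Lambda>' V' (X \<omega>))
          - LSE \<beta> (grid L) (score K \<eta> \<tau> p B L \<Lambda>s Vs (X \<omega>))" for \<omega>
      have Dint: "integrable M D" unfolding D_def by (intro Bochner_Integration.integrable_diff lseint)
      have intD: "(\<integral>\<omega>. D \<omega> \<partial>M) = (\<integral>\<omega>. LSE \<beta> (grid L) (score K \<eta> \<tau> p B L \<Lambda>' V' (X \<omega>)) \<partial>M)
          - (\<integral>\<omega>. LSE \<beta> (grid L) (score K \<eta> \<tau> p B L \<Lambda>s Vs (X \<omega>)) \<partial>M)"
        unfolding D_def by (rule Bochner_Integration.integral_diff[OF lseint lseint])
      have lin: "(\<Sum>l'\<in>grid L. \<Sum>k\<in>{1..K}. (\<Lambda>' l' k + V' l' k) * \<epsilon> k)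
          = (\<Sum>l'\<in>grid L. \<Sum>k\<in>{1..K}. (\<Lambda>s l' k + Vs l' k) * \<epsilon> k) + h * \<epsilon> s"
        unfolding \<Lambda>'_def V'_def using lin_pert[OF s l, of \<Lambda>s a Vs b \<epsilon>] ab(2) by simp
      have Fdiff: "Fobj M X K \<eta> \<tau> p B L \<beta> \<epsilon> \<Lambda>' V' - Fobj M X K \<eta> \<tau> p B L \<beta> \<epsilon> \<Lambda>s Vs
          = (\<integral>\<omega>. D \<omega> \<partial>M) + h * \<epsilon> s"
        unfolding Fobj_def intD lin by simp
      have hC: "h * (\<beta> * C) \<le> 1" using h \<beta> Cpos by (simp add: field_simps)
      have Dle: "AE \<omega> in M. D \<omega> \<le> \<sigma> * h * (hf (X \<omega>) * t \<omega>) + h\<^sup>2 * (\<beta> * C\<^sup>2)"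
        using tC
      proof eventually_elim
        fix \<omega> assume tb: "\<bar>t \<omega>\<bar> \<le> C"
        define u where "u = \<beta> * (\<sigma> * h * t \<omega>)"
        define q where "q = hf (X \<omega>)"
        have q01: "0 \<le> q" "q \<le> 1" using hf01 unfolding q_def by auto
        have D1: "D \<omega> \<le> q * (exp u - 1) / \<beta>"
          using lse_pert[OF finG(1) l \<beta>, of "score K \<eta> \<tau> p B L \<Lambda>s Vs (X \<omega>)" "\<sigma> * h * t \<omega>"]
          unfolding D_def sc' q_def hf_def pred_def u_def by simp
        have sabs: "\<bar>\<sigma>\<bar> = 1" using \<sigma> by auto
        have s2: "\<sigma>\<^sup>2 = 1" using \<sigma> by auto
        have absu: "\<bar>u\<bar> = \<beta> * h * \<bar>t \<omega>\<bar>" unfolding u_def using \<beta> h sabs by (simp add: abs_mult)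
        have "\<beta> * h * \<bar>t \<omega>\<bar> \<le> \<beta> * h * C" using tb \<beta> h by (intro mult_left_mono) auto
        then have u1: "u \<le> 1" using absu hC by (simp add: algebra_simps) 
        have eu: "exp u - 1 \<le> u + u\<^sup>2" by (rule exp_quad[OF u1])
        have "q * (exp u - 1) \<le> q * (u + u\<^sup>2)" by (rule mult_left_mono[OF eu q01(1)])
        then have D2: "D \<omega> \<le> q * (u + u\<^sup>2) / \<beta>" using D1 \<beta> by (smt (verit) divide_right_mono)
        have u2: "u\<^sup>2 = \<beta>\<^sup>2 * h\<^sup>2 * (t \<omega>)\<^sup>2" unfolding u_def using s2 by (simp add: power_mult_distrib)
        have "q * (u + u\<^sup>2) / \<beta> = \<sigma> * h * (q * t \<omega>) + q * (\<beta> * h\<^sup>2 * (t \<omega>)\<^sup>2)"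
          unfolding u2 using \<beta> unfolding u_def by (simp add: field_simps power2_eq_square)
        moreover have "(t \<omega>)\<^sup>2 \<le> C\<^sup>2"
          using power_mono[OF tb abs_ge_zero, of 2] by simp
        then have "q * (\<beta> * h\<^sup>2 * (t \<omega>)\<^sup>2) \<le> 1 * (\<beta> * h\<^sup>2 * C\<^sup>2)"
          using q01 \<beta> by (intro mult_mono mult_left_mono) auto
        ultimately show "D \<omega> \<le> \<sigma> * h * (hf (X \<omega>) * t \<omega>) + h\<^sup>2 * (\<beta> * C\<^sup>2)"
          using D2 unfolding q_def by (simp add: algebra_simps)
      qed
      have "(\<integral>\<omega>. D \<omega> \<partial>M) \<le> (\<integral>\<omega>. \<sigma> * h * (hf (X \<omega>) * t \<omega>) + h\<^sup>2 * (\<beta> * C\<^sup>2) \<partial>M)"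
        by (rule integral_mono_AE[OF Dint _ Dle]) (use \<pi>tint in auto)
      also have "\<dots> = \<sigma> * h * I + h\<^sup>2 * (\<beta> * C\<^sup>2)"
        unfolding I_def using \<pi>tint P.prob_space by (subst Bochner_Integration.integral_add) auto
      finally have "0 \<le> \<sigma> * h * I + h\<^sup>2 * (\<beta> * C\<^sup>2) + h * \<epsilon> s" using Fle Fdiff by linarith
      also have "\<dots> = h * (\<sigma> * I + h * (\<beta> * C\<^sup>2) + \<epsilon> s)" by (simp add: algebra_simps power2_eq_square)
      finally show "0 \<le> \<sigma> * I + h * (\<beta> * C\<^sup>2) + \<epsilon> s" using h by (simp add: zero_le_mult_iff)
    qed
    have c0: "0 \<le> \<beta> * C\<^sup>2" using \<beta> by simp
    have h0: "0 < 1 / (\<beta> * C)" using \<beta> Cpos by simp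
    have i1: "0 \<le> I + \<epsilon> s"
    proof (rule small_h[OF c0 h0])
      fix h :: real assume hh: "0 < h" "h \<le> 1 / (\<beta> * C)"
      have "0 \<le> 1 * I + h * (\<beta> * C\<^sup>2) + \<epsilon> s" using key[of 1 h] hh by blast
      then show "0 \<le> I + \<epsilon> s + h * (\<beta> * C\<^sup>2)" by simp
    qed
    have i2: "0 \<le> - I + \<epsilon> s"
    proof (rule small_h[OF c0 h0])
      fix h :: real assume hh: "0 < h" "h \<le> 1 / (\<beta> * C)"
      have "0 \<le> (-1) * I + h * (\<beta> * C\<^sup>2) + \<epsilon> s" using key[of "-1" h] hh by blast
      then show "0 \<le> - I + \<epsilon> s + h * (\<beta> * C\<^sup>2)" by simp
    qed
    have \<pi>\<tau>int: "integrable M (\<lambda>\<omega>. hf (X \<omega>) * \<tau> s (X \<omega>))"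
    proof (rule Bochner_Integration.integrable_bound[OF \<tau>_int[rule_format, OF s]])
      show "AE x in M. norm (hf (X x) * \<tau> s (X x)) \<le> norm (\<tau> s (X x))"
        using hfb by (auto simp: abs_mult intro!: mult_left_le_one_le)
      show "(\<lambda>\<omega>. hf (X \<omega>) * \<tau> s (X \<omega>)) \<in> borel_measurable M" using s by measurable
    qed
    have eq\<tau>: "(\<integral>\<omega>. hf (X \<omega>) * \<tau> s (X \<omega>) \<partial>M) = (\<integral>\<omega>. hf (X \<omega>) * indicator {\<omega>\<in>space M. S \<omega> = s} \<omega> \<partial>M)"
      by (rule \<tau>h[OF s hfm hfb])
    have "I = (\<integral>\<omega>. hf (X \<omega>) - hf (X \<omega>) * \<tau> s (X \<omega>) / p s \<partial>M)"
      unfolding I_def t_def tfun_def by (simp add: algebra_simps)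
    also have "\<dots> = (\<integral>\<omega>. hf (X \<omega>) \<partial>M) - (\<integral>\<omega>. hf (X \<omega>) * \<tau> s (X \<omega>) \<partial>M) / p s"
      using \<pi>int \<pi>\<tau>int by (subst Bochner_Integration.integral_diff) auto
    finally have Ieq: "I = (\<integral>\<omega>. hf (X \<omega>) \<partial>M) - (\<integral>\<omega>. hf (X \<omega>) * indicator {\<omega>\<in>space M. S \<omega> = s} \<omega> \<partial>M) / p s"
      using eq\<tau> by simp
    have "unfair M X S (pred K \<eta> \<tau> p B L \<beta> \<Lambda>s Vs) s l = \<bar>I\<bar>"
      unfolding unfair_def Ieq p_def[rule_format, OF s, symmetric] hf_def[symmetric] by simp
    then show "unfair M X S (pred K \<eta> \<tau> p B L \<beta> \<Lambda>s Vs) s l \<le> \<epsilon> s" using i1 i2 by simp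
  qed
qed

end
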